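(* Let $\Sigma=b^2M_nQ\Psi Q^\top M_n\in\mathbb R^{n\times n}$ be the steady-state covariance of the observables (notation in the context), with $n\ge2$. Then for every $i\in\{1,\dots,n\}$, the $(n-1)\times(n-1)$ principal submatrix obtained from $\Sigma$ by deleting its $i$-th row and $i$-th column is invertible; consequently every principal submatrix of $\Sigma$ of size at most $n-1$ is invertible.
   Context: $L$ is the Laplacian of a connected undirected simple graph with positive edge weights, $L=Q\Lambda Q^\top$, $Q=[q_1|\dots|q_n]$ orthogonal, $q_1=\mathbf 1_n/\sqrt n$, $\Lambda=\mathrm{diag}(0,\lambda_2,\dots,\lambda_n)$ with $0<\lambda_2\le\dots\le\lambda_n$; the delay satisfies $0\le\tau<\pi/(2\lambda_n)$; $b\neq0$; $M_n=I_n-\frac1n\mathbf 1_n\mathbf 1_n^\top$; $\Psi=\mathrm{diag}(0,\psi(\lambda_2),\dots,\psi(\lambda_n))$ with $\psi(\lambda)=\frac{\cos(\lambda\tau)}{2\lambda(1-\sin(\lambda\tau))}$. *)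

theory Defs
  imports "Jordan_Normal_Form.Determinant" "Jordan_Normal_Form.DL_Submatrix"
begin

text \<open>Vertices are 0..n-1. A weighted undirected simple graph is given by a weight
  function w: w i j > 0 iff {i,j} is an edge, w i j = 0 otherwise.\<close>

definition weighted_simple_graph :: "nat \<Rightarrow> (nat \<Rightarrow> nat \<Rightarrow> real) \<Rightarrow> bool" where
  "weighted_simple_graph n w \<longleftrightarrow>
     (\<forall>i<n. \<forall>j<n. w i j = w j i \<and> w i j \<ge> 0) \<and> (\<forall>i<n. w i i = 0)"

definition graph_connected :: "nat \<Rightarrow> (nat \<Rightarrow> nat \<Rightarrow> real) \<Rightarrow> bool" where
  "graph_connected n w \<longleftrightarrow>
     (\<forall>i<n. \<forall>j<n. (\<lambda>a b. a < n \<and> b < n \<and> w a b > 0)\<^sup>*\<^sup>* i j)"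

definition laplacian :: "nat \<Rightarrow> (nat \<Rightarrow> nat \<Rightarrow> real) \<Rightarrow> real mat" where
  "laplacian n w = mat n n (\<lambda>(i,j). if i = j then (\<Sum>k<n. w i k) else - w i j)"

definition centering_mat :: "nat \<Rightarrow> real mat" where
  "centering_mat n = 1\<^sub>m n - mat n n (\<lambda>_. 1 / real n)"

definition psi :: "real \<Rightarrow> real \<Rightarrow> real" where
  "psi \<tau> x = cos (x * \<tau>) / (2 * x * (1 - sin (x * \<tau>)))"

text \<open>Psi = diag(0, psi(lambda_2), ..., psi(lambda_n)); eigenvalues indexed 0..n-1.\<close>
definition Psi_mat :: "nat \<Rightarrow> real \<Rightarrow> (nat \<Rightarrow> real) \<Rightarrow> real mat" where
  "Psi_mat n \<tau> lam = mat_diag n (\<lambda>k. if k = 0 then 0 else psi \<tau> (lam k))"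

definition steady_cov :: "nat \<Rightarrow> real \<Rightarrow> real \<Rightarrow> real mat \<Rightarrow> (nat \<Rightarrow> real) \<Rightarrow> real mat" where
  "steady_cov n b \<tau> Q lam =
     (b^2) \<cdot>\<^sub>m (centering_mat n * Q * Psi_mat n \<tau> lam * Q\<^sup>T * centering_mat n)"

end

theory Submission imports Defs begin

lemma smult_mat_vec: "x \<in> carrier_vec (dim_col C) \<Longrightarrow> (c \<cdot>\<^sub>m (C::real mat)) *\<^sub>v x = c \<cdot>\<^sub>v (C *\<^sub>v x)"
  by (intro eq_vecI) (auto simp: mult_mat_vec_def scalar_prod_def sum_distrib_left ac_simps)

lemma centering_T: "transpose_mat (centering_mat n) = centering_mat n"
  by (intro eq_matI) (auto simp: centering_mat_def)

lemma centering_carrier[simp]: "centering_mat n \<in> carrier_mat n n"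
  by (auto simp: centering_mat_def)

lemma centering_vec: assumes "x \<in> carrier_vec n" "i < n"
  shows "(centering_mat n *\<^sub>v x) $ i = x $ i - (\<Sum>j<n. x $ j) / real n"
proof -
  have "(centering_mat n *\<^sub>v x) $ i = (\<Sum>j<n. (if i = j then x $ j else 0) - x $ j / real n)"
    using assms by (auto simp: centering_mat_def mult_mat_vec_def scalar_prod_def algebra_simps
        lessThan_atLeast0 intro!: sum.cong)
  also have "\<dots> = x $ i - (\<Sum>j<n. x $ j) / real n"
    using assms by (simp add: sum_subtractf sum_divide_distrib)
  finally show ?thesis .
qed

lemma diag_vec: assumes "z \<in> carrier_vec n" "k < n"
  shows "(mat_diag n f *\<^sub>v z) $ k = f k * z $ k"
proof -
  have "(mat_diag n f *\<^sub>v z) $ k = (\<Sum>j = 0..<n. (if k = j then f j else 0) * z $ j)"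
    using assms by (auto simp: mat_diag_def mult_mat_vec_def scalar_prod_def intro!: sum.cong)
  also have "\<dots> = (\<Sum>j = 0..<n. (if k = j then f j * z $ j else 0))"
    by (intro sum.cong refl) simp
  also have "\<dots> = f k * z $ k" using assms by simp
  finally show ?thesis .
qed

lemma kernel_cov:
  fixes Q :: "real mat" and f :: "nat \<Rightarrow> real"
  assumes n: "n \<ge> 1" and Qc: "Q \<in> carrier_mat n n"
    and Qorth: "Q\<^sup>T * Q = 1\<^sub>m n"
    and Q1: "col Q 0 = vec n (\<lambda>_. 1 / sqrt (real n))"
    and f0: "f 0 = 0" and fpos: "\<And>k. 1 \<le> k \<Longrightarrow> k < n \<Longrightarrow> f k > 0"
    and x: "x \<in> carrier_vec n"
    and q: "x \<bullet> ((c \<cdot>\<^sub>m (centering_mat n * Q * mat_diag n f * Q\<^sup>T * centering_mat n)) *\<^sub>v x) = 0"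
    and c: "c \<noteq> 0"
  shows "\<forall>i<n. x $ i = (\<Sum>j<n. x $ j) / real n"
proof -
  define M where "M = centering_mat n"
  define D where "D = mat_diag n f"
  have Mc: "M \<in> carrier_mat n n" and Dc: "D \<in> carrier_mat n n" and QTc: "Q\<^sup>T \<in> carrier_mat n n"
    using Qc by (auto simp: M_def D_def)
  define w where "w = M *\<^sub>v x"
  define z where "z = Q\<^sup>T *\<^sub>v w"
  have wc: "w \<in> carrier_vec n" and zc: "z \<in> carrier_vec n" using Mc QTc x by (auto simp: w_def z_def)
  have Dzc: "D *\<^sub>v z \<in> carrier_vec n" using Dc zc by auto
  have QDzc: "Q *\<^sub>v (D *\<^sub>v z) \<in> carrier_vec n" using Qc Dzc by auto
  have c1: "M * Q \<in> carrier_mat n n" "M * Q * D \<in> carrier_mat n n" "M * Q * D * Q\<^sup>T \<in> carrier_mat n n"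
    using Mc Qc Dc QTc by auto
  have "(M * Q * D * Q\<^sup>T * M) *\<^sub>v x = (M * Q * D * Q\<^sup>T) *\<^sub>v w"
    unfolding w_def by (rule assoc_mult_mat_vec[OF c1(3) Mc x])
  also have "\<dots> = (M * Q * D) *\<^sub>v z"
    unfolding z_def by (rule assoc_mult_mat_vec[OF c1(2) QTc wc])
  also have "\<dots> = (M * Q) *\<^sub>v (D *\<^sub>v z)"
    by (rule assoc_mult_mat_vec[OF c1(1) Dc zc])
  also have "\<dots> = M *\<^sub>v (Q *\<^sub>v (D *\<^sub>v z))"
    by (rule assoc_mult_mat_vec[OF Mc Qc Dzc])
  finally have "(M * Q * D * Q\<^sup>T * M) *\<^sub>v x = M *\<^sub>v (Q *\<^sub>v (D *\<^sub>v z))" .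
  then have "(c \<cdot>\<^sub>m (M * Q * D * Q\<^sup>T * M)) *\<^sub>v x = c \<cdot>\<^sub>v (M *\<^sub>v (Q *\<^sub>v (D *\<^sub>v z)))"
    using Mc Qc Dc QTc x by (subst smult_mat_vec) auto
  moreover have uc: "M *\<^sub>v (Q *\<^sub>v (D *\<^sub>v z)) \<in> carrier_vec n" using Mc QDzc by auto
  ultimately have "c * (x \<bullet> (M *\<^sub>v (Q *\<^sub>v (D *\<^sub>v z)))) = 0"
    using q scalar_prod_smult_distrib[OF x uc] by (simp add: M_def D_def)
  then have "x \<bullet> (M *\<^sub>v (Q *\<^sub>v (D *\<^sub>v z))) = 0" using c by simp
  moreover have "x \<bullet> (M *\<^sub>v (Q *\<^sub>v (D *\<^sub>v z))) = w \<bullet> (Q *\<^sub>v (D *\<^sub>v z))"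
    using transpose_vec_mult_scalar[OF Mc QDzc x] by (simp add: w_def M_def centering_T)
  moreover have "w \<bullet> (Q *\<^sub>v (D *\<^sub>v z)) = z \<bullet> (D *\<^sub>v z)"
    using transpose_vec_mult_scalar[OF Qc Dzc wc] by (simp add: z_def)
  moreover have "z \<bullet> (D *\<^sub>v z) = (\<Sum>k<n. f k * (z $ k)^2)"
  proof -
    have "z \<bullet> (D *\<^sub>v z) = (\<Sum>i\<in>{0..<n}. z $ i * (D *\<^sub>v z) $ i)"
      using Dzc unfolding scalar_prod_def by (metis carrier_vecD)
    also have "\<dots> = (\<Sum>k<n. f k * (z $ k)^2)"
      unfolding lessThan_atLeast0 D_def
      by (intro sum.cong refl) (simp add: diag_vec[OF zc] power2_eq_square)
    finally show ?thesis .
  qed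
  ultimately have S0: "(\<Sum>k<n. f k * (z $ k)^2) = 0" by simp
  have fnn: "\<And>k. k < n \<Longrightarrow> f k \<ge> 0" using f0 fpos
    by (metis less_one not_le order_less_le)
  have zk: "\<And>k. 1 \<le> k \<Longrightarrow> k < n \<Longrightarrow> z $ k = 0"
  proof -
    fix k assume k: "1 \<le> k" "k < n"
    have "f k * (z $ k)^2 = 0"
      using S0 sum_nonneg_eq_0_iff[of "{..<n}" "\<lambda>k. f k * (z $ k)^2"] fnn k by auto
    then show "z $ k = 0" using fpos[OF k] by simp
  qed
  have sw: "(\<Sum>i<n. w $ i) = 0"
  proof -
    have "(\<Sum>i<n. w $ i) = (\<Sum>i<n. x $ i - (\<Sum>j<n. x $ j) / real n)"
      using x by (auto simp: w_def M_def centering_vec intro!: sum.cong)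
    also have "\<dots> = 0" using n by (simp add: sum_subtractf)
    finally show ?thesis .
  qed
  have "z $ 0 = col Q 0 \<bullet> w"
    using Qc n by (simp add: z_def)
  also have "\<dots> = (\<Sum>i<n. w $ i) / sqrt (real n)"
    using wc Q1 by (simp add: scalar_prod_def lessThan_atLeast0 sum_divide_distrib)
  finally have z0: "z $ 0 = 0" using sw by simp
  have z00: "z = 0\<^sub>v n"
  proof (rule eq_vecI)
    fix i assume "i < dim_vec (0\<^sub>v n)"
    then have i: "i < n" by simp
    show "z $ i = 0\<^sub>v n $ i"
    proof (cases "i = 0")
      case True then show ?thesis using z0 i by simp
    next
      case False then show ?thesis using zk[of i] i by simp
    qed
  qed (use zc in simp)
  have QQT: "Q * Q\<^sup>T = 1\<^sub>m n"
    using mat_mult_left_right_inverse[OF QTc Qc Qorth] .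
  have "w = (Q * Q\<^sup>T) *\<^sub>v w" using wc by (simp add: QQT)
  also have "\<dots> = Q *\<^sub>v z" using Qc QTc wc by (simp add: z_def)
  also have "\<dots> = 0\<^sub>v n" using Qc by (intro eq_vecI) (auto simp: z00)
  finally have w0: "w = 0\<^sub>v n" .
  show ?thesis
  proof (intro allI impI)
    fix i assume i: "i < n"
    have "w $ i = 0" using w0 i by simp
    then show "x $ i = (\<Sum>j<n. x $ j) / real n"
      using centering_vec[OF x i] by (simp add: w_def M_def)
  qed
qed

lemma det_ne0_invertible:
  assumes B: "(B :: real mat) \<in> carrier_mat m m" and d: "det B \<noteq> 0"
  shows "invertible_mat B"
proof -
  have "B \<in> Units (ring_mat TYPE(real) m ())" by (rule det_non_zero_imp_unit[OF B d])
  then obtain C where C: "C \<in> carrier_mat m m" "C * B = 1\<^sub>m m" "B * C = 1\<^sub>m m"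
    by (auto simp: Units_def ring_mat_simps)
  then show ?thesis using B unfolding invertible_mat_def inverts_mat_def square_mat.simps
    by (metis carrier_matD)
qed

lemma sub_inv:
  fixes A :: "real mat" and g :: "nat \<Rightarrow> nat"
  assumes Ac: "A \<in> carrier_mat n n"
    and ker: "\<And>x. x \<in> carrier_vec n \<Longrightarrow> x \<bullet> (A *\<^sub>v x) = 0 \<Longrightarrow> (\<forall>i<n. \<forall>j<n. x $ i = x $ j)"
    and gn: "\<And>k. k < m \<Longrightarrow> g k < n" and ginj: "inj_on g {..<m}"
    and j0: "j0 < n" "\<And>k. k < m \<Longrightarrow> g k \<noteq> j0"
  shows "invertible_mat (mat m m (\<lambda>(k,l). A $$ (g k, g l)))"
proof -
  define B where "B = mat m m (\<lambda>(k,l). A $$ (g k, g l))"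
  define P :: "real mat" where "P = mat n m (\<lambda>(i,k). if i = g k then 1 else 0)"
  have Bc: "B \<in> carrier_mat m m" and Pc: "P \<in> carrier_mat n m" and PTc: "P\<^sup>T \<in> carrier_mat m n"
    by (auto simp: B_def P_def)
  have BP: "B = P\<^sup>T * A * P"
  proof (rule eq_matI)
    fix k l assume k: "k < dim_row (P\<^sup>T * A * P)" and l: "l < dim_col (P\<^sup>T * A * P)"
    then have k: "k < m" and l: "l < m" using Pc by auto
    have r1: "(P\<^sup>T * A) $$ (k, j) = A $$ (g k, j)" if j: "j < n" for j
    proof -
      have "(P\<^sup>T * A) $$ (k, j) = (\<Sum>i\<in>{0..<n}. P\<^sup>T $$ (k, i) * A $$ (i, j))"
        using k j Pc Ac by (simp add: scalar_prod_def)
      also have "\<dots> = (\<Sum>i\<in>{0..<n}. if i = g k then A $$ (i, j) else 0)"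
        using k by (intro sum.cong refl) (auto simp: P_def)
      also have "\<dots> = A $$ (g k, j)" using gn[OF k] by simp
      finally show ?thesis .
    qed
    have "(P\<^sup>T * A * P) $$ (k, l) = row (P\<^sup>T * A) k \<bullet> col P l"
      using k l Pc Ac by (intro index_mult_mat(1)) auto
    also have "\<dots> = (\<Sum>j\<in>{0..<n}. A $$ (g k, j) * P $$ (j, l))"
    proof -
      have r2: "row (P\<^sup>T * A) k $ j = A $$ (g k, j)" if j: "j < n" for j
      proof -
        have "row (P\<^sup>T * A) k $ j = (P\<^sup>T * A) $$ (k, j)"
          using k j Pc Ac by (intro index_row(1)) auto
        then show ?thesis using r1[OF j] by simp
      qed
      have r3: "col P l $ j = P $$ (j, l)" if j: "j < n" for j
        using j l Pc by (intro index_col) auto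
      have dc: "dim_vec (col P l) = n" using Pc by simp
      show ?thesis unfolding scalar_prod_def dc
      proof (rule sum.cong[OF refl])
        fix j assume "j \<in> {0..<n}"
        then have j: "j < n" by simp
        show "row (P\<^sup>T * A) k $ j * col P l $ j = A $$ (g k, j) * P $$ (j, l)"
          by (simp only: r2[OF j] r3[OF j])
      qed
    qed
    also have "\<dots> = (\<Sum>j\<in>{0..<n}. if j = g l then A $$ (g k, j) else 0)"
      using l by (intro sum.cong refl) (auto simp: P_def)
    also have "\<dots> = A $$ (g k, g l)" using gn[OF l] by simp
    finally show "B $$ (k, l) = (P\<^sup>T * A * P) $$ (k, l)" using k l by (simp add: B_def)
  qed (use Pc in \<open>auto simp: B_def\<close>)
  have "det B \<noteq> 0"
  proof
    assume "det B = 0"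
    then obtain v where v: "v \<in> carrier_vec m" "v \<noteq> 0\<^sub>v m" "B *\<^sub>v v = 0\<^sub>v m"
      using det_0_iff_vec_prod_zero_field[OF Bc] by blast
    define y where "y = P *\<^sub>v v"
    have yc: "y \<in> carrier_vec n" using Pc v by (simp add: y_def)
    have Ayc: "A *\<^sub>v y \<in> carrier_vec n" using Ac yc by simp
    have "B *\<^sub>v v = P\<^sup>T *\<^sub>v (A *\<^sub>v y)"
    proof -
      have "P\<^sup>T * A \<in> carrier_mat m n" using PTc Ac by simp
      then have "(P\<^sup>T * A * P) *\<^sub>v v = (P\<^sup>T * A) *\<^sub>v y"
        unfolding y_def by (rule assoc_mult_mat_vec[OF _ Pc v(1)])
      also have "\<dots> = P\<^sup>T *\<^sub>v (A *\<^sub>v y)"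
        by (rule assoc_mult_mat_vec[OF PTc Ac yc])
      finally show ?thesis unfolding BP .
    qed
    then have e: "P\<^sup>T *\<^sub>v (A *\<^sub>v y) = 0\<^sub>v m" using v(3) by simp
    have "0 = v \<bullet> (P\<^sup>T *\<^sub>v (A *\<^sub>v y))" unfolding e using v(1) by simp
    also have "\<dots> = (P\<^sup>T *\<^sub>v (A *\<^sub>v y)) \<bullet> v"
      using v PTc Ayc by (intro comm_scalar_prod[of _ m]) auto
    also have "\<dots> = (A *\<^sub>v y) \<bullet> y"
      unfolding y_def by (rule transpose_vec_mult_scalar[OF Pc v(1)]) (use Ayc in \<open>simp add: y_def\<close>)
    also have "\<dots> = y \<bullet> (A *\<^sub>v y)" using yc Ayc by (intro comm_scalar_prod[of _ n]) auto
    finally have "y \<bullet> (A *\<^sub>v y) = 0" by simp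
    from ker[OF yc this] have const: "\<forall>i<n. \<forall>j<n. y $ i = y $ j" .
    have yent: "y $ i = (\<Sum>k\<in>{0..<m}. if i = g k then v $ k else 0)" if i: "i < n" for i
    proof -
      have "y $ i = (\<Sum>k\<in>{0..<m}. P $$ (i, k) * v $ k)"
        using i Pc v by (simp add: y_def scalar_prod_def)
      also have "\<dots> = (\<Sum>k\<in>{0..<m}. if i = g k then v $ k else 0)"
        using i by (intro sum.cong refl) (auto simp: P_def)
      finally show ?thesis .
    qed
    have nz: "\<forall>k\<in>{0..<m}. j0 \<noteq> g k" using j0(2) by (metis atLeastLessThan_iff)
    have "y $ j0 = 0" unfolding yent[OF j0(1)] using nz by (intro sum.neutral) auto
    then have y0: "\<And>i. i < n \<Longrightarrow> y $ i = 0" using const j0(1) by metis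
    have "v = 0\<^sub>v m"
    proof (rule eq_vecI)
      fix k assume "k < dim_vec (0\<^sub>v m)"
      then have k: "k < m" by simp
      have "(\<Sum>l\<in>{0..<m}. if g k = g l then v $ l else 0) = (\<Sum>l\<in>{0..<m}. if l = k then v $ l else 0)"
        using k ginj by (intro sum.cong refl) (auto simp: inj_on_def)
      also have "\<dots> = v $ k" using k by simp
      finally have "v $ k = y $ (g k)" using yent[OF gn[OF k]] by simp
      then show "v $ k = 0\<^sub>v m $ k" using y0[OF gn[OF k]] k by simp
    qed (use v in simp)
    with v(2) show False by simp
  qed
  then show ?thesis using det_ne0_invertible[OF Bc] by (simp add: B_def)
qed

lemma psi_pos:
  assumes x: "0 < x" "x \<le> L" and t0: "0 \<le> \<tau>" and t1: "\<tau> < pi / (2 * L)"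
  shows "psi \<tau> x > 0"
proof -
  have L: "L > 0" using x by simp
  have "\<tau> * (2 * L) < pi" using t1 L by (simp add: field_simps)
  moreover have "x * \<tau> \<le> L * \<tau>" using x t0 by (simp add: mult_right_mono)
  moreover have "\<tau> * (2 * L) = 2 * (L * \<tau>)" by simp
  ultimately have u: "x * \<tau> < pi / 2" by linarith
  have u0: "0 \<le> x * \<tau>" using x t0 by simp
  have c: "cos (x * \<tau>) > 0" using u u0 by (intro cos_gt_zero_pi) auto
  have cc: "cos (x * \<tau>) * cos (x * \<tau>) > 0" using c by simp
  have "sin (x * \<tau>) * sin (x * \<tau>) < 1" using sin_cos_squared_add[of "x * \<tau>"] cc
    unfolding power2_eq_square by linarith
  then have "sin (x * \<tau>) < 1"
  proof (rule contrapos_pp)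
    assume "\<not> sin (x * \<tau>) < 1"
    then have s1: "1 \<le> sin (x * \<tau>)" by simp
    have "1 * 1 \<le> sin (x * \<tau>) * sin (x * \<tau>)" by (rule mult_mono) (use s1 in auto)
    then show "\<not> sin (x * \<tau>) * sin (x * \<tau>) < 1" by simp
  qed
  then show ?thesis using c x unfolding psi_def by (intro divide_pos_pos) auto
qed

theorem lemma2:
  fixes n :: nat and w :: "nat \<Rightarrow> nat \<Rightarrow> real" and Q :: "real mat"
    and lam :: "nat \<Rightarrow> real" and \<tau> b :: real
  assumes n2: "n \<ge> 2"
    and graph: "weighted_simple_graph n w"
    and conn: "graph_connected n w"
    and Qc: "Q \<in> carrier_mat n n"
    and Qorth: "Q\<^sup>T * Q = 1\<^sub>m n"
    and Q1: "col Q 0 = vec n (\<lambda>_. 1 / sqrt (real n))"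
    and lam0: "lam 0 = 0"
    and lam1: "0 < lam 1"
    and lam_sorted: "\<And>i j. 1 \<le> i \<Longrightarrow> i \<le> j \<Longrightarrow> j < n \<Longrightarrow> lam i \<le> lam j"
    and spec: "laplacian n w = Q * mat_diag n lam * Q\<^sup>T"
    and tau0: "0 \<le> \<tau>"
    and tau1: "\<tau> < pi / (2 * lam (n - 1))"
    and b: "b \<noteq> 0"
  shows "(\<forall>i<n. invertible_mat (mat_delete (steady_cov n b \<tau> Q lam) i i))
       \<and> (\<forall>S. S \<subseteq> {..<n} \<longrightarrow> card S \<le> n - 1 \<longrightarrow>
              invertible_mat (submatrix (steady_cov n b \<tau> Q lam) S S))"
proof -
  define A where "A = steady_cov n b \<tau> Q lam"
  define f where "f = (\<lambda>k. if k = 0 then 0 else psi \<tau> (lam k))"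
  have Ac: "A \<in> carrier_mat n n" unfolding A_def steady_cov_def Psi_mat_def
    by (intro smult_carrier_mat mult_carrier_mat[of _ n n] centering_carrier mat_diag_dim) (use Qc in auto)
  have fpos: "f k > 0" if "1 \<le> k" "k < n" for k
  proof -
    have "lam 1 \<le> lam k" using lam_sorted[of 1 k] that by simp
    moreover have "lam k \<le> lam (n - 1)" using lam_sorted[of k "n - 1"] that by simp
    ultimately show ?thesis using that lam1 psi_pos[OF _ _ tau0 tau1, of "lam k"] by (simp add: f_def)
  qed
  have ker: "\<forall>i<n. \<forall>j<n. x $ i = x $ j" if x: "x \<in> carrier_vec n" "x \<bullet> (A *\<^sub>v x) = 0" for x
  proof -
    have q: "x \<bullet> ((b^2 \<cdot>\<^sub>m (centering_mat n * Q * mat_diag n f * Q\<^sup>T * centering_mat n)) *\<^sub>v x) = 0"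
      using x(2) unfolding A_def steady_cov_def Psi_mat_def f_def .
    have "\<forall>i<n. x $ i = (\<Sum>j<n. x $ j) / real n"
      by (rule kernel_cov[OF _ Qc Qorth Q1 _ fpos x(1) q]) (use n2 b in \<open>auto simp: f_def\<close>)
    then show ?thesis by metis
  qed
  have P1: "\<forall>i<n. invertible_mat (mat_delete A i i)"
  proof (intro allI impI)
    fix i assume i: "i < n"
    define g where "g = (\<lambda>k. if k < i then k else Suc k)"
    have "mat_delete A i i = mat (n - 1) (n - 1) (\<lambda>(k,l). A $$ (g k, g l))"
      unfolding mat_delete_def g_def using Ac by (simp only: carrier_matD)
    moreover have "invertible_mat (mat (n - 1) (n - 1) (\<lambda>(k,l). A $$ (g k, g l)))"
      by (rule sub_inv[OF Ac ker, of "n - 1" g i]) (use i in \<open>auto simp: g_def inj_on_def split: if_splits\<close>)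
    ultimately show "invertible_mat (mat_delete A i i)" by simp
  qed
  have P2: "invertible_mat (submatrix A S S)" if S: "S \<subseteq> {..<n}" "card S \<le> n - 1" for S
  proof -
    have fin: "finite S" using S finite_subset by blast
    have cS: "{i. i < dim_row A \<and> i \<in> S} = S" using S Ac by auto
    have "submatrix A S S = mat (card S) (card S) (\<lambda>(k,l). A $$ (pick S k, pick S l))"
      unfolding submatrix_def using cS Ac by simp
    moreover obtain j0 where j0: "j0 < n" "j0 \<notin> S"
    proof -
      have "S \<noteq> {..<n}" using S n2 by auto
      then show ?thesis using S that by auto
    qed
    moreover have "invertible_mat (mat (card S) (card S) (\<lambda>(k,l). A $$ (pick S k, pick S l)))"
    proof (rule sub_inv[OF Ac ker, of "card S" "pick S" j0])
      show "\<And>k. k < card S \<Longrightarrow> pick S k < n" using S pick_in_set_le by blast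
      show "inj_on (pick S) {..<card S}"
        by (rule inj_onI) (metis lessThan_iff nat_neq_iff pick_mono_le)
      show "j0 < n" by (rule j0)
      show "\<And>k. k < card S \<Longrightarrow> pick S k \<noteq> j0" using j0 pick_in_set_le by metis
    qed
    ultimately show ?thesis by simp
  qed
  show ?thesis using P1 P2 unfolding A_def by blast
qed

end
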